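(* Let $\mathfrak{g}$ be a finite-dimensional complex Lie algebra admitting an inner CPA-structure $x\cdot y=[\phi(x),y]$ with $\phi$ a Lie algebra endomorphism of $\mathfrak{g}$. Then $\mathfrak{g}$ decomposes as a direct sum $\mathfrak{g}=\mathfrak{n}\oplus\mathfrak{h}$ of $\phi$-invariant ideals (ideals both of the Lie algebra and of the algebra $(\mathfrak{g},\cdot)$) such that: (1) $\phi|_{\mathfrak{n}}$ is a nilpotent endomorphism of $\mathfrak{n}$ and the induced CPA-structure on $\mathfrak{n}$ is nil-inner; (2) $\phi|_{\mathfrak{h}}$ is an automorphism of $\mathfrak{h}$, and $[[\mathfrak{h},\mathfrak{h}],[\mathfrak{h},\mathfrak{h}]]=0$.
   Context: A CPA-structure on a Lie algebra $\mathfrak{g}$ is a bilinear product $x\cdot y$ on $\mathfrak{g}$ satisfying, for all $x,y,z$: $x\cdot y=y\cdot x$; $[x,y]\cdot z=x\cdot(y\cdot z)-y\cdot(x\cdot z)$; $x\cdot[y,z]=[x\cdot y,z]+[y,x\cdot z]$. It is called inner if $x\cdot y=[\phi(x),y]$ for some Lie algebra homomorphism $\phi:\mathfrak{g}\to\mathfrak{g}$, and nil-inner if it can be written in this form with $\phi$ a nilpotent Lie algebra homomorphism. A subspace $I$ is an ideal if it is both a Lie ideal ($[\mathfrak{g},I]\subseteq I$) and an algebra ideal ($\mathfrak{g}\cdot I\subseteq I$). *)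

theory Defs
  imports Complex_Main
begin

definition bilinear_map :: "(complex \<Rightarrow> 'a \<Rightarrow> 'a) \<Rightarrow> ('a::ab_group_add \<Rightarrow> 'a \<Rightarrow> 'a) \<Rightarrow> bool" where
  "bilinear_map sc m \<longleftrightarrow>
     (\<forall>x. Vector_Spaces.linear sc sc (m x)) \<and> (\<forall>y. Vector_Spaces.linear sc sc (\<lambda>x. m x y))"

definition lie_algebra :: "(complex \<Rightarrow> 'a \<Rightarrow> 'a) \<Rightarrow> ('a::ab_group_add \<Rightarrow> 'a \<Rightarrow> 'a) \<Rightarrow> bool" where
  "lie_algebra sc br \<longleftrightarrow> vector_space sc \<and> bilinear_map sc br \<and>
     (\<forall>x. br x x = 0) \<and>
     (\<forall>x y z. br x (br y z) + br y (br z x) + br z (br x y) = 0)"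

definition fin_dim_complex_lie_algebra ::
  "(complex \<Rightarrow> 'a \<Rightarrow> 'a) \<Rightarrow> ('a::ab_group_add \<Rightarrow> 'a \<Rightarrow> 'a) \<Rightarrow> bool" where
  "fin_dim_complex_lie_algebra sc br \<longleftrightarrow> lie_algebra sc br \<and>
     (\<exists>B. finite_dimensional_vector_space sc B)"

definition lie_endo :: "(complex \<Rightarrow> 'a \<Rightarrow> 'a) \<Rightarrow> ('a::ab_group_add \<Rightarrow> 'a \<Rightarrow> 'a) \<Rightarrow> ('a \<Rightarrow> 'a) \<Rightarrow> bool" where
  "lie_endo sc br f \<longleftrightarrow> Vector_Spaces.linear sc sc f \<and> (\<forall>x y. f (br x y) = br (f x) (f y))"

definition cpa_structure :: "(complex \<Rightarrow> 'a \<Rightarrow> 'a) \<Rightarrow> ('a::ab_group_add \<Rightarrow> 'a \<Rightarrow> 'a) \<Rightarrow> ('a \<Rightarrow> 'a \<Rightarrow> 'a) \<Rightarrow> bool" where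
  "cpa_structure sc br p \<longleftrightarrow> bilinear_map sc p \<and>
     (\<forall>x y. p x y = p y x) \<and>
     (\<forall>x y z. p (br x y) z = p x (p y z) - p y (p x z)) \<and>
     (\<forall>x y z. p x (br y z) = br (p x y) z + br y (p x z))"

definition inner_cpa_via :: "(complex \<Rightarrow> 'a \<Rightarrow> 'a) \<Rightarrow> ('a::ab_group_add \<Rightarrow> 'a \<Rightarrow> 'a) \<Rightarrow> ('a \<Rightarrow> 'a) \<Rightarrow> bool" where
  "inner_cpa_via sc br phi \<longleftrightarrow> lie_endo sc br phi \<and> cpa_structure sc br (\<lambda>x y. br (phi x) y)"

definition lie_endo_on :: "(complex \<Rightarrow> 'a \<Rightarrow> 'a) \<Rightarrow> ('a::ab_group_add \<Rightarrow> 'a \<Rightarrow> 'a) \<Rightarrow> 'a set \<Rightarrow> ('a \<Rightarrow> 'a) \<Rightarrow> bool" where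
  "lie_endo_on sc br S f \<longleftrightarrow> f ` S \<subseteq> S \<and>
     (\<forall>x\<in>S. \<forall>y\<in>S. f (x + y) = f x + f y) \<and>
     (\<forall>c. \<forall>x\<in>S. f (sc c x) = sc c (f x)) \<and>
     (\<forall>x\<in>S. \<forall>y\<in>S. f (br x y) = br (f x) (f y))"

definition nilpotent_on :: "'a set \<Rightarrow> ('a::zero \<Rightarrow> 'a) \<Rightarrow> bool" where
  "nilpotent_on S f \<longleftrightarrow> f ` S \<subseteq> S \<and> (\<exists>k. \<forall>x\<in>S. (f ^^ k) x = 0)"

definition nil_inner_on :: "(complex \<Rightarrow> 'a \<Rightarrow> 'a) \<Rightarrow> ('a::ab_group_add \<Rightarrow> 'a \<Rightarrow> 'a) \<Rightarrow> 'a set \<Rightarrow> ('a \<Rightarrow> 'a \<Rightarrow> 'a) \<Rightarrow> bool" where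
  "nil_inner_on sc br S p \<longleftrightarrow>
     (\<exists>psi. lie_endo_on sc br S psi \<and> nilpotent_on S psi \<and>
            (\<forall>x\<in>S. \<forall>y\<in>S. p x y = br (psi x) y))"

definition cpa_ideal :: "(complex \<Rightarrow> 'a \<Rightarrow> 'a) \<Rightarrow> ('a::ab_group_add \<Rightarrow> 'a \<Rightarrow> 'a) \<Rightarrow> ('a \<Rightarrow> 'a \<Rightarrow> 'a) \<Rightarrow> 'a set \<Rightarrow> bool" where
  "cpa_ideal sc br p I \<longleftrightarrow> module.subspace sc I \<and>
     (\<forall>x y. y \<in> I \<longrightarrow> br x y \<in> I) \<and> (\<forall>x y. y \<in> I \<longrightarrow> p x y \<in> I)"

definition bracket_space :: "(complex \<Rightarrow> 'a \<Rightarrow> 'a) \<Rightarrow> ('a::ab_group_add \<Rightarrow> 'a \<Rightarrow> 'a) \<Rightarrow> 'a set \<Rightarrow> 'a set \<Rightarrow> 'a set" where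
  "bracket_space sc br A B = module.span sc {br a b | a b. a \<in> A \<and> b \<in> B}"

definition direct_sum_decomp :: "'a::ab_group_add set \<Rightarrow> 'a set \<Rightarrow> bool" where
  "direct_sum_decomp N H \<longleftrightarrow> N \<inter> H = {0} \<and>
     (\<forall>z. \<exists>x\<in>N. \<exists>y\<in>H. z = x + y)"

end

theory Submission imports Defs begin

locale cpa_ctx = finite_dimensional_vector_space sc Bs
  for sc :: "complex \<Rightarrow> 'a::ab_group_add \<Rightarrow> 'a" and Bs +
  fixes br :: "'a \<Rightarrow> 'a \<Rightarrow> 'a" and phi :: "'a \<Rightarrow> 'a"
  assumes lin_r: "Vector_Spaces.linear sc sc (br x)"
    and lin_l: "Vector_Spaces.linear sc sc (\<lambda>x. br x y)"
    and alt: "br x x = 0"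
    and jac: "br x (br y z) + br y (br z x) + br z (br x y) = 0"
    and phi_lin: "Vector_Spaces.linear sc sc phi"
    and phi_hom: "phi (br x y) = br (phi x) (phi y)"
    and comm: "br (phi x) y = br (phi y) x"
begin

lemma lin_add: "Vector_Spaces.linear sc sc f \<Longrightarrow> f (x + y) = f x + f y"
  by (simp add: Vector_Spaces.linear_iff)
lemma lin_scale: "Vector_Spaces.linear sc sc f \<Longrightarrow> f (sc c x) = sc c (f x)"
  by (simp add: Vector_Spaces.linear_iff)
lemma lin_zero: assumes "Vector_Spaces.linear sc sc f" shows "f 0 = 0"
proof -
  have "f 0 = f 0 + f 0" using lin_add[OF assms, of 0 0] by simp
  then show ?thesis by simp
qed
lemma lin_neg: assumes "Vector_Spaces.linear sc sc f" shows "f (- x) = - f x"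
proof -
  have "f (- x) + f x = 0" using lin_add[OF assms, of "- x" x] lin_zero[OF assms] by simp
  then show ?thesis by (simp add: eq_neg_iff_add_eq_0)
qed
lemma lin_diff: assumes "Vector_Spaces.linear sc sc f" shows "f (x - y) = f x - f y"
proof -
  have "f (x - y) = f (x + - y)" by (simp only: diff_conv_add_uminus)
  also have "\<dots> = f x + - f y" by (simp only: lin_add[OF assms] lin_neg[OF assms])
  finally show ?thesis by (simp only: diff_conv_add_uminus)
qed

lemma lin_pow: assumes "Vector_Spaces.linear sc sc f" shows "Vector_Spaces.linear sc sc (f ^^ n)"
proof (induction n)
  case 0 show ?case using assms by (simp add: Vector_Spaces.linear_iff)
next
  case (Suc n) then show ?case using assms by (simp add: Vector_Spaces.linear_iff)
qed

lemma pow_zero_mono: assumes "Vector_Spaces.linear sc sc f" "(f ^^ m) x = 0" "m \<le> n"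
  shows "(f ^^ n) x = 0"
proof -
  have "n = (n - m) + m" using assms(3) by simp
  then have "(f ^^ n) x = (f ^^ (n - m)) ((f ^^ m) x)"
    by (metis funpow_add o_apply)
  then show ?thesis using assms(2) lin_zero[OF lin_pow[OF assms(1)]] by simp
qed

lemmas br_r = lin_add[OF lin_r] lin_scale[OF lin_r] lin_zero[OF lin_r] lin_neg[OF lin_r] lin_diff[OF lin_r]
lemma br_l: "br (x + y) z = br x z + br y z" "br (sc c x) z = sc c (br x z)" "br 0 z = 0"
  "br (- x) z = - br x z" "br (x - y) z = br x z - br y z"
  using lin_add[OF lin_l] lin_scale[OF lin_l] lin_zero[OF lin_l] lin_neg[OF lin_l] lin_diff[OF lin_l]
  by auto
lemmas phi_l = lin_add[OF phi_lin] lin_scale[OF phi_lin] lin_zero[OF phi_lin] lin_neg[OF phi_lin] lin_diff[OF phi_lin]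

lemma anti: "br x y = - br y x"
proof -
  have e: "br (x + y) (x + y) = (br x x + br x y) + (br y x + br y y)"
    by (simp only: br_l(1) br_r(1) ac_simps)
  have "br x y + br y x = 0" using e alt[of "x+y"] alt[of x] alt[of y] by simp
  then show ?thesis by (simp add: eq_neg_iff_add_eq_0)
qed

lemma der: "br X (br u w) = br (br X u) w + br u (br X w)"
proof -
  have "br X (br u w) + br u (br w X) + br w (br X u) = 0" by (rule jac)
  moreover have "br u (br w X) = - br u (br X w)" by (metis anti br_r(4))
  moreover have "br w (br X u) = - br (br X u) w" by (rule anti)
  ultimately have "br X (br u w) + (- br u (br X w)) + (- br (br X u) w) = 0" by simp
  then show ?thesis by (simp add: eq_neg_iff_add_eq_0 add.assoc diff_conv_add_uminus[symmetric]) (simp add: algebra_simps)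
qed

lemma Bm: "br (phi x) y = - br x (phi y)"
proof -
  have "br (phi x) y = br (phi y) x" by (rule comm)
  also have "\<dots> = - br x (phi y)" by (rule anti)
  finally show ?thesis .
qed

lemma sign_pow:
  assumes "Vector_Spaces.linear sc sc f" "Vector_Spaces.linear sc sc g"
    and "\<And>x y. br (f x) y = - br x (g y)"
  shows "br ((f ^^ n) x) y = sc ((-1) ^ n) (br x ((g ^^ n) y))"
proof (induction n arbitrary: y)
  case 0 then show ?case by simp
next
  case (Suc n)
  have "br ((f ^^ Suc n) x) y = br (f ((f ^^ n) x)) y" by simp
  also have "\<dots> = - br ((f ^^ n) x) (g y)" by (rule assms(3))
  also have "\<dots> = - sc ((-1) ^ n) (br x ((g ^^ n) (g y)))" using Suc by simp
  also have "\<dots> = sc ((-1) ^ Suc n) (br x ((g ^^ Suc n) y))"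
    by (simp only: funpow_Suc_right comp_def power_Suc mult_minus1 scale_minus_left)
  finally show ?case .
qed

lemma sign_pow_zero:
  assumes "Vector_Spaces.linear sc sc f" "Vector_Spaces.linear sc sc g"
    and "\<And>x y. br (f x) y = - br x (g y)" and "(f ^^ n) x = 0"
  shows "br x ((g ^^ n) y) = 0"
  using sign_pow[OF assms(1-3), of n x y] assms(4) br_l(3) by simp

lemma pow_inv: assumes "f ` S \<subseteq> S" shows "(f ^^ n) ` S \<subseteq> S"
  by (induction n) (use assms in auto)

lemma pow_inv': assumes "f ` S \<subseteq> S" "x \<in> S" shows "(f ^^ n) x \<in> S"
  using pow_inv[OF assms(1)] assms(2) by auto

lemma chain_dec: assumes "\<And>n. subspace (A n)" "\<And>n. A (Suc n) \<subseteq> A n"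
  shows "\<exists>k. A (Suc k) = A k"
proof (rule ccontr)
  assume "\<not> ?thesis"
  then have ne: "A (Suc n) \<noteq> A n" for n by auto
  have lt: "dim (A (Suc n)) < dim (A n)" for n
  proof (rule ccontr)
    assume "\<not> ?thesis" then have "dim (A n) \<le> dim (A (Suc n))" by simp
    then have "A (Suc n) = A n" using subspace_dim_equal[OF assms(1)[of "Suc n"] assms(1)[of n] assms(2)[of n]] by blast
    with ne show False by simp
  qed
  have "dim (A n) + n \<le> dim (A 0)" for n
  proof (induction n)
    case (Suc n) then show ?case using lt[of n] by simp
  qed simp
  from this[of "Suc (dim (A 0))"] show False by simp
qed

lemma chain_inc: assumes "\<And>n. subspace (A n)" "\<And>n. A n \<subseteq> A (Suc n)"
  shows "\<exists>k. A (Suc k) = A k"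
proof (rule ccontr)
  assume "\<not> ?thesis"
  then have ne: "A (Suc n) \<noteq> A n" for n by auto
  have lt: "dim (A n) < dim (A (Suc n))" for n
  proof (rule ccontr)
    assume "\<not> ?thesis" then have "dim (A (Suc n)) \<le> dim (A n)" by simp
    then have "A n = A (Suc n)" using subspace_dim_equal[OF assms(1)[of n] assms(1)[of "Suc n"] assms(2)[of n]] by blast
    with ne[of n] show False by auto
  qed
  have "n \<le> dim (A n)" for n
  proof (induction n)
    case (Suc n) then show ?case using lt[of n] by simp
  qed simp
  from this[of "Suc dimension"] dim_subset_UNIV[of "A (Suc dimension)"] show False by simp
qed

lemma fitting:
  assumes f: "Vector_Spaces.linear sc sc f" and S: "subspace S" and inv: "f ` S \<subseteq> S"
  shows "\<exists>k. \<forall>j\<ge>k. (\<forall>s\<in>S. \<exists>a b. s = a + b \<and> a \<in> S \<and> (f ^^ j) a = 0 \<and> b \<in> (f ^^ j) ` S)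
     \<and> (\<forall>t\<in>S. (f ^^ j) ((f ^^ j) t) = 0 \<longrightarrow> (f ^^ j) t = 0)
     \<and> f ` ((f ^^ j) ` S) = (f ^^ j) ` S"
proof -
  define I where "I n = (f ^^ n) ` S" for n
  define K where "K n = {x\<in>S. (f ^^ n) x = 0}" for n
  note fl = lin_pow[OF f]
  have subI: "subspace (I n)" for n
    unfolding I_def
  proof (rule subspaceI)
    show "0 \<in> (f ^^ n) ` S" using lin_zero[OF fl, of n] subspace_0[OF S] by force
    show "x + y \<in> (f ^^ n) ` S" if hx: "x \<in> (f ^^ n) ` S" and hy: "y \<in> (f ^^ n) ` S" for x y
    proof -
      obtain a where "a \<in> S" "x = (f ^^ n) a" using hx by blast
      moreover obtain b where "b \<in> S" "y = (f ^^ n) b" using hy by blast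
      ultimately
      show ?thesis using lin_add[OF fl, of n a b] subspace_add[OF S] by force
    qed
    show "sc c x \<in> (f ^^ n) ` S" if hx: "x \<in> (f ^^ n) ` S" for c x
    proof -
      obtain a where "a \<in> S" "x = (f ^^ n) a" using hx by blast
      then show ?thesis using lin_scale[OF fl, of n c a] subspace_scale[OF S, of a c] by (metis image_eqI)
    qed
  qed
  have subK: "subspace (K n)" for n
    unfolding K_def
  proof (rule subspaceI)
    show "0 \<in> {x \<in> S. (f ^^ n) x = 0}" using lin_zero[OF fl, of n] subspace_0[OF S] by force
    show "x + y \<in> {x \<in> S. (f ^^ n) x = 0}" if "x \<in> {x \<in> S. (f ^^ n) x = 0}" "y \<in> {x \<in> S. (f ^^ n) x = 0}" for x y
      using that lin_add[OF fl, of n x y] subspace_add[OF S] by auto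
    show "sc c x \<in> {x \<in> S. (f ^^ n) x = 0}" if "x \<in> {x \<in> S. (f ^^ n) x = 0}" for c x
      using that lin_scale[OF fl, of n c x] subspace_scale[OF S] by auto
  qed
  have IS: "I (Suc n) = f ` I n" for n
    unfolding I_def by (simp add: image_comp)
  have decI: "I (Suc n) \<subseteq> I n" for n
  proof -
    have "I (Suc n) = (f ^^ n) ` (f ` S)" by (simp only: I_def funpow_Suc_right image_comp)
    also have "\<dots> \<subseteq> I n" unfolding I_def using inv by auto
    finally show ?thesis .
  qed
  have incK: "K n \<subseteq> K (Suc n)" for n
    unfolding K_def using lin_zero[OF f] by auto
  obtain k1 where k1: "I (Suc k1) = I k1" using chain_dec[of I, OF subI decI] by blast
  obtain k2 where k2: "K (Suc k2) = K k2" using chain_inc[of K, OF subK incK] by blast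
  have memK: "x \<in> K n \<longleftrightarrow> x \<in> S \<and> (f ^^ n) x = 0" for x n by (simp add: K_def)
  have stI: "I (k1 + j) = I k1" for j
  proof (induction j)
    case (Suc j)
    have "I (k1 + Suc j) = f ` I (k1 + j)" using IS[of "k1 + j"] by (simp only: add_Suc_right)
    also have "\<dots> = f ` I k1" by (simp only: Suc.IH)
    also have "\<dots> = I k1" using IS[of k1] k1 by (simp only:)
    finally show ?case .
  qed simp
  have stK: "K (k2 + j) = K k2" for j
  proof (induction j)
    case (Suc j)
    have A1: "x \<in> K k2" if x: "x \<in> K (k2 + Suc j)" for x
    proof -
      have xS: "x \<in> S" and z: "(f ^^ Suc (k2 + j)) x = 0" using x memK by auto
      have "(f ^^ (k2 + j)) (f x) = 0" using z by (simp only: funpow_Suc_right comp_def)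
      moreover have "f x \<in> S" using inv xS by blast
      ultimately have "f x \<in> K (k2 + j)" using memK by blast
      then have "f x \<in> K k2" using Suc.IH by blast
      then have "(f ^^ k2) (f x) = 0" using memK by blast
      then have "(f ^^ Suc k2) x = 0" by (simp only: funpow_Suc_right comp_def)
      then have "x \<in> K (Suc k2)" using memK xS by blast
      then show ?thesis using k2 by blast
    qed
    have A2: "K k2 \<subseteq> K (k2 + Suc j)"
      using Suc.IH incK[of "k2 + j"] by (simp only: add_Suc_right)
    show ?case using A1 A2 by blast
  qed simp
  have stI': "j \<ge> k1 \<Longrightarrow> I j = I k1" for j using stI[of "j - k1"] by simp
  have stK': "j \<ge> k2 \<Longrightarrow> K j = K k2" for j using stK[of "j - k2"] by simp
  show ?thesis
  proof (rule exI[of _ "max k1 k2"], intro allI impI conjI)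
    fix j assume j: "max k1 k2 \<le> j"
    have Ij: "I j = I (j + j)" "I (Suc j) = I j" using stI'[of j] stI'[of "j+j"] stI'[of "Suc j"] j by auto
    have Kj: "K j = K (j + j)" using stK'[of j] stK'[of "j+j"] j by auto
    show "\<forall>s\<in>S. \<exists>a b. s = a + b \<and> a \<in> S \<and> (f ^^ j) a = 0 \<and> b \<in> (f ^^ j) ` S"
    proof
      fix s assume s: "s \<in> S"
      have "(f ^^ j) s \<in> I (j + j)" using Ij s unfolding I_def by auto
      then obtain t where t: "t \<in> S" "(f ^^ j) s = (f ^^ j) ((f ^^ j) t)"
        unfolding I_def by (auto simp: funpow_add)
      have bS: "(f ^^ j) t \<in> S" using pow_inv'[OF inv t(1)] .
      show "\<exists>a b. s = a + b \<and> a \<in> S \<and> (f ^^ j) a = 0 \<and> b \<in> (f ^^ j) ` S"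
      proof (intro exI conjI)
        show "s = (s - (f ^^ j) t) + (f ^^ j) t" by simp
        show "s - (f ^^ j) t \<in> S" using subspace_diff[OF S s bS] .
        show "(f ^^ j) (s - (f ^^ j) t) = 0" using lin_diff[OF fl, of j s "(f ^^ j) t"] t(2) by simp
        show "(f ^^ j) t \<in> (f ^^ j) ` S" using t(1) by blast
      qed
    qed
    show "\<forall>t\<in>S. (f ^^ j) ((f ^^ j) t) = 0 \<longrightarrow> (f ^^ j) t = 0"
    proof (intro ballI impI)
      fix t assume "t \<in> S" "(f ^^ j) ((f ^^ j) t) = 0"
      then have "t \<in> K (j + j)" unfolding K_def by (simp add: funpow_add)
      then show "(f ^^ j) t = 0" using Kj unfolding K_def by auto
    qed
    have "f ` I j = I j" using IS[of j] Ij(2) by simp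
    then show "f ` ((f ^^ j) ` S) = (f ^^ j) ` S" unfolding I_def .
  qed
qed

definition fs :: "complex \<Rightarrow> 'a \<Rightarrow> 'a" where "fs s x = phi x - sc s x"

lemma vs: "vector_space sc"
  using phi_lin unfolding Vector_Spaces.linear_iff by blast

lemma fs_add: "fs s (x + y) = fs s x + fs s y"
  unfolding fs_def by (simp add: phi_l scale_right_distrib)
lemma fs_scale: "fs s (sc c x) = sc c (fs s x)"
  unfolding fs_def by (simp add: phi_l scale_right_diff_distrib mult.commute)

lemma fs_lin: "Vector_Spaces.linear sc sc (fs s)"
  unfolding Vector_Spaces.linear_iff using vs fs_add fs_scale by blast

lemmas fs_l = lin_add[OF fs_lin] lin_scale[OF fs_lin] lin_zero[OF fs_lin] lin_neg[OF fs_lin] lin_diff[OF fs_lin]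

lemma fs_bm: "br (fs s x) y = - br x (fs (- s) y)"
proof -
  have "br (fs s x) y = br (phi x) y - sc s (br x y)" unfolding fs_def by (simp add: br_l)
  also have "\<dots> = - br x (phi y) - sc s (br x y)" by (simp only: Bm)
  also have "\<dots> = - br x (fs (- s) y)" unfolding fs_def by (simp add: br_r)
  finally show ?thesis .
qed

lemma phi_fs: "phi (fs s x) = fs s (phi x)"
  unfolding fs_def by (simp add: phi_l)

lemma fs_comm: "fs s (fs t x) = fs t (fs s x)"
  unfolding fs_def by (simp add: phi_l scale_right_diff_distrib mult.commute algebra_simps)

lemma pow_commute: assumes "\<And>x. f (g x) = g (f x)" shows "(f ^^ n) (g x) = g ((f ^^ n) x)"
  by (induction n) (simp_all add: assms)

lemma pow_commute2: assumes "\<And>x. f (g x) = g (f x)" shows "(f ^^ n) ((g ^^ m) x) = (g ^^ m) ((f ^^ n) x)"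
proof (induction m)
  case (Suc m)
  have "(f ^^ n) ((g ^^ Suc m) x) = g ((f ^^ n) ((g ^^ m) x))"
    using pow_commute[of f g, OF assms] by simp
  then show ?case using Suc by simp
qed simp

lemma fs_prod: "fs (s * t) (br u v) = br (fs s u) (fs t v) + sc t (br (fs s u) v) + sc s (br u (fs t v))"
proof -
  have pu: "phi u = fs s u + sc s u" by (simp add: fs_def)
  have pv: "phi v = fs t v + sc t v" by (simp add: fs_def)
  have "fs (s * t) (br u v) = br (phi u) (phi v) - sc (s * t) (br u v)" by (simp add: fs_def phi_hom)
  also have "\<dots> = br (fs s u + sc s u) (fs t v + sc t v) - sc (s * t) (br u v)" by (simp only: pu pv)
  also have "\<dots> = br (fs s u) (fs t v) + sc t (br (fs s u) v) + sc s (br u (fs t v))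
        + sc (s * t) (br u v) - sc (s * t) (br u v)"
    by (simp only: br_l(1,2) br_r(1,2) scale_scale scale_right_distrib ac_simps)
  finally show ?thesis by simp
qed

lemma kp: "a + b = n \<Longrightarrow> (fs s ^^ a) u = 0 \<Longrightarrow> (fs t ^^ b) v = 0 \<Longrightarrow> (fs (s * t) ^^ n) (br u v) = 0"
proof (induction n arbitrary: a b u v rule: less_induct)
  case (less n)
  note pz = lin_zero[OF lin_pow[OF fs_lin]]
  show ?case
  proof (cases "a = 0 \<or> b = 0")
    case True
    then have "u = 0 \<or> v = 0" using less.prems by auto
    then have "br u v = 0" using br_l(3) br_r(3) by auto
    then show ?thesis using pz by simp
  next
    case False
    then obtain a' b' where ab: "a = Suc a'" "b = Suc b'" by (metis not0_implies_Suc)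
    then obtain n' where n: "n = Suc n'" using less.prems(1) by auto
    have u1: "(fs s ^^ a') (fs s u) = 0" using less.prems(2) ab by (simp add: funpow_Suc_right del: funpow.simps)
    have v1: "(fs t ^^ b') (fs t v) = 0" using less.prems(3) ab by (simp add: funpow_Suc_right del: funpow.simps)
    have T1: "(fs (s * t) ^^ n') (br (fs s u) (fs t v)) = 0"
    proof -
      have "(fs (s * t) ^^ (a' + b')) (br (fs s u) (fs t v)) = 0"
        using less.IH[of "a' + b'" a' b' "fs s u" "fs t v"] u1 v1 ab n less.prems(1) by simp
      moreover have "a' + b' \<le> n'" using ab n less.prems(1) by simp
      ultimately show ?thesis by (rule pow_zero_mono[OF fs_lin])
    qed
    have T2: "(fs (s * t) ^^ n') (br (fs s u) v) = 0"
      using less.IH[of n' a' b "fs s u" v] u1 less.prems(3) ab n less.prems(1) by simp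
    have T3: "(fs (s * t) ^^ n') (br u (fs t v)) = 0"
      using less.IH[of n' a b' u "fs t v"] v1 less.prems(2) ab n less.prems(1) by simp
    have "(fs (s * t) ^^ n) (br u v) = (fs (s * t) ^^ n') (fs (s * t) (br u v))"
      using n by (simp add: funpow_Suc_right del: funpow.simps)
    also have "\<dots> = (fs (s * t) ^^ n') (br (fs s u) (fs t v)) + sc t ((fs (s * t) ^^ n') (br (fs s u) v))
        + sc s ((fs (s * t) ^^ n') (br u (fs t v)))"
      by (simp only: fs_prod lin_add[OF lin_pow[OF fs_lin]] lin_scale[OF lin_pow[OF fs_lin]])
    also have "\<dots> = 0" using T1 T2 T3 by simp
    finally show ?thesis .
  qed
qed

lemma eig: assumes "phi x = sc s x" shows "(fs t ^^ b) x = sc ((s - t) ^ b) x"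
proof (induction b)
  case 0 then show ?case by simp
next
  case (Suc b)
  have ft: "fs t x = sc (s - t) x" unfolding fs_def assms by (simp add: scale_left_diff_distrib)
  have "(fs t ^^ Suc b) x = fs t (sc ((s - t) ^ b) x)" using Suc by simp
  also have "\<dots> = sc ((s - t) ^ b) (sc (s - t) x)" by (simp only: fs_scale ft)
  also have "\<dots> = sc ((s - t) ^ Suc b) x" by (simp add: mult.commute)
  finally show ?case .
qed

lemma cop: "s \<noteq> t \<Longrightarrow> (fs s ^^ a) x = 0 \<Longrightarrow> (fs t ^^ b) x = 0 \<Longrightarrow> x = 0"
proof (induction a arbitrary: x)
  case 0 then show ?case by simp
next
  case (Suc a)
  have y1: "(fs s ^^ a) (fs s x) = 0" using Suc.prems(2) by (simp add: funpow_Suc_right del: funpow.simps)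
  have y2: "(fs t ^^ b) (fs s x) = 0"
    using pow_commute[of "fs t" "fs s" b x, OF fs_comm] Suc.prems(3) fs_l(3) by simp
  have "fs s x = 0" using Suc.IH[OF Suc.prems(1) y1 y2] .
  then have px: "phi x = sc s x" unfolding fs_def by simp
  have "sc ((s - t) ^ b) x = 0" using eig[OF px, where t=t and b=b] Suc.prems(3) by simp
  then show ?case using Suc.prems(1) by simp
qed

lemma subspace_ker: assumes "Vector_Spaces.linear sc sc g" shows "subspace {z. g z = 0}"
  by (rule subspaceI) (auto simp: lin_zero[OF assms] lin_add[OF assms] lin_scale[OF assms])

lemma abel: assumes s: "s \<noteq> 0" and x: "(fs s ^^ m) x = 0" and y: "(fs s ^^ m) y = 0"
  shows "br x y = 0"
proof -
  define S where "S = {z. (fs s ^^ m) z = 0}"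
  have SS: "subspace S" unfolding S_def by (rule subspace_ker[OF lin_pow[OF fs_lin]])
  have inv: "fs (- s) ` S \<subseteq> S"
  proof
    fix z assume "z \<in> fs (- s) ` S"
    then obtain w where w: "w \<in> S" "z = fs (- s) w" by blast
    have e: "(fs s ^^ m) (fs (- s) w) = fs (- s) ((fs s ^^ m) w)"
      by (rule pow_commute[of "fs s" "fs (- s)", OF fs_comm])
    have w0: "(fs s ^^ m) w = 0" using w(1) unfolding S_def by blast
    have "(fs s ^^ m) z = 0" unfolding w(2) e w0 by (rule fs_l(3))
    then show "z \<in> S" unfolding S_def by blast
  qed
  obtain k where k0: "\<forall>j\<ge>k. (\<forall>s'\<in>S. \<exists>a b. s' = a + b \<and> a \<in> S \<and> (fs (- s) ^^ j) a = 0 \<and> b \<in> (fs (- s) ^^ j) ` S)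
     \<and> (\<forall>t\<in>S. (fs (- s) ^^ j) ((fs (- s) ^^ j) t) = 0 \<longrightarrow> (fs (- s) ^^ j) t = 0)
     \<and> fs (- s) ` ((fs (- s) ^^ j) ` S) = (fs (- s) ^^ j) ` S"
    using fitting[OF fs_lin SS inv] by (elim exE) (rule that)
  have k: "\<forall>j\<ge>k. (\<forall>s'\<in>S. \<exists>a b. s' = a + b \<and> a \<in> S \<and> (fs (- s) ^^ j) a = 0 \<and> b \<in> (fs (- s) ^^ j) ` S)"
    using k0 by blast
  define j where "j = max k m"
  have yS: "y \<in> S" using y unfolding S_def by simp
  obtain a b where ab: "y = a + b" "a \<in> S" "(fs (- s) ^^ j) a = 0" "b \<in> (fs (- s) ^^ j) ` S"
  proof -
    have "k \<le> j" unfolding j_def by simp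
    then have "\<forall>s'\<in>S. \<exists>a b. s' = a + b \<and> a \<in> S \<and> (fs (- s) ^^ j) a = 0 \<and> b \<in> (fs (- s) ^^ j) ` S"
      using k by blast
    then show ?thesis using yS that by blast
  qed
  have "s \<noteq> - s" using s by simp
  moreover have "(fs s ^^ m) a = 0" using ab(2) unfolding S_def by simp
  ultimately have a0: "a = 0" using cop ab(3) by blast
  obtain t where t: "b = (fs (- s) ^^ j) t" using ab(4) by blast
  have "j = m + (j - m)" unfolding j_def by simp
  then have "b = (fs (- s) ^^ m) ((fs (- s) ^^ (j - m)) t)" using t by (metis funpow_add o_apply)
  moreover have "br x ((fs (- s) ^^ m) w) = 0" for w
    by (rule sign_pow_zero[OF fs_lin fs_lin fs_bm x])
  ultimately show ?thesis using ab(1) a0 by simp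
qed

lemma subspace_img: assumes g: "Vector_Spaces.linear sc sc g" and S: "subspace S"
  shows "subspace (g ` S)"
proof (rule subspaceI)
  show "0 \<in> g ` S" using lin_zero[OF g] subspace_0[OF S] by force
  show "x + y \<in> g ` S" if hx: "x \<in> g ` S" and hy: "y \<in> g ` S" for x y
  proof -
    obtain a where a: "a \<in> S" "x = g a" using hx by blast
    obtain b where b: "b \<in> S" "y = g b" using hy by blast
    have "x + y = g (a + b)" using a b lin_add[OF g] by simp
    moreover have "a + b \<in> S" using subspace_add[OF S a(1) b(1)] .
    ultimately show ?thesis by blast
  qed
  show "sc c x \<in> g ` S" if hx: "x \<in> g ` S" for c x
  proof -
    obtain a where a: "a \<in> S" "x = g a" using hx by blast
    have "sc c x = g (sc c a)" using a lin_scale[OF g] by simp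
    moreover have "sc c a \<in> S" using subspace_scale[OF S a(1)] .
    ultimately show ?thesis by blast
  qed
qed

lemma pow_hom: "(phi ^^ n) (br x y) = br ((phi ^^ n) x) ((phi ^^ n) y)"
  by (induction n) (simp_all add: phi_hom)

lemma C1: "phi (br x z) = - br x (phi (phi z))"
  by (simp only: phi_hom Bm)

lemma C4: "br (br x y) (phi (phi (phi (phi u)))) = br (br x y) (phi (phi u))"
proof -
  define P4 where "P4 = phi (phi (phi (phi u)))"
  have dd: "br (br x y) v = br x (br y v) - br y (br x v)" for v
    using der[of x y v] by (simp add: algebra_simps)
  have q: "phi (phi (br a u)) = br a P4" for a
  proof -
    have "phi (phi (br a u)) = phi (- br a (phi (phi u)))" by (simp only: C1)
    also have "\<dots> = - phi (br a (phi (phi u)))" by (simp only: phi_l(4))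
    also have "\<dots> = br a P4" unfolding P4_def by (simp only: C1 minus_minus)
    finally show ?thesis .
  qed
  have "phi (br (br x y) u) = phi (br x (br y u)) - phi (br y (br x u))" by (simp only: dd phi_l(5))
  also have "\<dots> = - br x (phi (phi (br y u))) + br y (phi (phi (br x u)))" by (simp only: C1) simp
  also have "\<dots> = - br x (br y P4) + br y (br x P4)" by (simp only: q)
  also have "\<dots> = - br (br x y) P4" by (simp only: dd) simp
  finally have e1: "phi (br (br x y) u) = - br (br x y) P4" .
  have e2: "phi (br (br x y) u) = - br (br x y) (phi (phi u))" by (rule C1)
  from e1 e2 show ?thesis unfolding P4_def by simp
qed

lemma fs_m1_1: "fs (-1) (fs 1 w) = phi (phi w) - w"
  unfolding fs_def by (simp add: phi_l scale_minus_left)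

lemma Elem:
  assumes "(fs 1 ^^ M) a1 = 0" "(fs (-1) ^^ M) c1 = 0" "(fs 1 ^^ M) a2 = 0" "(fs (-1) ^^ M) c2 = 0"
  shows "(fs (-1) ^^ (M + M)) (br (a1 + c1) (a2 + c2)) = 0"
proof -
  have L: "Vector_Spaces.linear sc sc (fs (-1) ^^ (M + M))" by (rule lin_pow[OF fs_lin])
  have z1: "br a1 a2 = 0" using abel[of 1 M a1 a2] assms by simp
  have z2: "br c1 c2 = 0" using abel[of "-1" M c1 c2] assms by simp
  have k1: "(fs (-1) ^^ (M + M)) (br a1 c2) = 0" using kp[of M M "M + M" 1 a1 "-1" c2] assms by simp
  have k2: "(fs (-1) ^^ (M + M)) (br a2 c1) = 0" using kp[of M M "M + M" 1 a2 "-1" c1] assms by simp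
  have "br (a1 + c1) (a2 + c2) = br a1 a2 + br a1 c2 + (br c1 a2 + br c1 c2)"
    by (simp only: br_l(1) br_r(1) ac_simps)
  also have "\<dots> = br a1 c2 + - br a2 c1" using z1 z2 anti[of c1 a2] by simp
  finally have "br (a1 + c1) (a2 + c2) = br a1 c2 + - br a2 c1" .
  then show ?thesis using k1 k2 lin_diff[OF L] by simp
qed

lemma fs_inv: assumes HS: "subspace H" and Hinv: "phi ` H \<subseteq> H" shows "fs s ` H \<subseteq> H"
proof
  fix z assume "z \<in> fs s ` H"
  then obtain h where h: "h \<in> H" "z = fs s h" by blast
  have "phi h \<in> H" using Hinv h(1) by blast
  moreover have "sc s h \<in> H" using subspace_scale[OF HS h(1)] .
  ultimately show "z \<in> H" unfolding h(2) fs_def using subspace_diff[OF HS] by blast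
qed

lemma bracket_part:
  assumes HS: "subspace H" and Hinv: "phi ` H \<subseteq> H" and Hsurj: "\<forall>h\<in>H. \<exists>h'\<in>H. h = phi h'"
    and Hid: "\<forall>x y. y \<in> H \<longrightarrow> br x y \<in> H"
  shows "\<forall>a\<in>span {br a b |a b. a \<in> H \<and> b \<in> H}. \<forall>b\<in>span {br a b |a b. a \<in> H \<and> b \<in> H}. br a b = 0"
proof -
  define G where "G = {br a b |a b. a \<in> H \<and> b \<in> H}"
  have GH: "G \<subseteq> H" unfolding G_def using Hid by blast
  have spanGH: "span G \<subseteq> H" by (rule span_minimal[OF GH HS])
  have Gmem: "\<exists>a b. x = br a b \<and> a \<in> H \<and> b \<in> H" if "x \<in> G" for x using that unfolding G_def by blast
  have Gin: "br a b \<in> span G" if "a \<in> H" "b \<in> H" for a b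
    using that span_base[of "br a b" G] unfolding G_def by blast
  have A: "br X (phi (phi w) - w) = 0" if X: "X \<in> span G" and w: "w \<in> H" for X w
  proof -
    obtain w1 where w1: "w1 \<in> H" "w = phi w1" using Hsurj w by blast
    obtain w2 where w2: "w2 \<in> H" "w1 = phi w2" using Hsurj w1(1) by blast
    have "br X (phi (phi (phi (phi w2)))) = br X (phi (phi w2))"
      using X
    proof (induction rule: span_induct_alt)
      case base then show ?case by (simp only: br_l(3))
    next
      case (step c x y)
      obtain a b where "x = br a b" using step.hyps(1) unfolding G_def by blast
      then have "br x (phi (phi (phi (phi w2)))) = br x (phi (phi w2))" by (simp only: C4)
      then show ?case using step.IH by (simp only: br_l(1,2))
    qed
    then show ?thesis unfolding w1(2) w2(2) by (simp only: br_r(5) diff_self)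
  qed
  have inv1: "fs 1 ` H \<subseteq> H" by (rule fs_inv[OF HS Hinv])
  have invm1: "fs (-1) ` H \<subseteq> H" by (rule fs_inv[OF HS Hinv])
  obtain j1 where j1: "\<forall>j\<ge>j1. (\<forall>s'\<in>H. \<exists>a b. s' = a + b \<and> a \<in> H \<and> (fs 1 ^^ j) a = 0 \<and> b \<in> (fs 1 ^^ j) ` H)
     \<and> (\<forall>t\<in>H. (fs 1 ^^ j) ((fs 1 ^^ j) t) = 0 \<longrightarrow> (fs 1 ^^ j) t = 0)
     \<and> fs 1 ` ((fs 1 ^^ j) ` H) = (fs 1 ^^ j) ` H"
    using fitting[OF fs_lin HS inv1] by (elim exE) (rule that)
  define J1 where "J1 = Suc j1"
  have dec1: "\<forall>s'\<in>H. \<exists>a b. s' = a + b \<and> a \<in> H \<and> (fs 1 ^^ J1) a = 0 \<and> b \<in> (fs 1 ^^ J1) ` H"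
    using j1 unfolding J1_def by (meson le_SucI order_refl)
  define H1 where "H1 = (fs 1 ^^ J1) ` H"
  have H1S: "subspace H1" unfolding H1_def by (rule subspace_img[OF lin_pow[OF fs_lin] HS])
  have H1H: "H1 \<subseteq> H" unfolding H1_def by (rule pow_inv[OF inv1])
  have inv2: "fs (-1) ` H1 \<subseteq> H1"
  proof
    fix z assume "z \<in> fs (-1) ` H1"
    then obtain t where t: "t \<in> H" "z = fs (-1) ((fs 1 ^^ J1) t)" unfolding H1_def by blast
    have "z = (fs 1 ^^ J1) (fs (-1) t)" unfolding t(2) by (rule pow_commute[of "fs 1" "fs (-1)", OF fs_comm, symmetric])
    moreover have "fs (-1) t \<in> H" using invm1 t(1) by blast
    ultimately show "z \<in> H1" unfolding H1_def by blast
  qed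
  obtain j2 where j2: "\<forall>j\<ge>j2. (\<forall>s'\<in>H1. \<exists>a b. s' = a + b \<and> a \<in> H1 \<and> (fs (-1) ^^ j) a = 0 \<and> b \<in> (fs (-1) ^^ j) ` H1)
     \<and> (\<forall>t\<in>H1. (fs (-1) ^^ j) ((fs (-1) ^^ j) t) = 0 \<longrightarrow> (fs (-1) ^^ j) t = 0)
     \<and> fs (-1) ` ((fs (-1) ^^ j) ` H1) = (fs (-1) ^^ j) ` H1"
    using fitting[OF fs_lin H1S inv2] by (elim exE) (rule that)
  define J2 where "J2 = Suc j2"
  have dec2: "\<forall>s'\<in>H1. \<exists>a b. s' = a + b \<and> a \<in> H1 \<and> (fs (-1) ^^ J2) a = 0 \<and> b \<in> (fs (-1) ^^ J2) ` H1"
    using j2 unfolding J2_def by (meson le_SucI order_refl)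
  define M where "M = J1 + J2"
  define Ek where "Ek e \<longleftrightarrow> e \<in> H \<and> (\<exists>a c. e = a + c \<and> (fs 1 ^^ M) a = 0 \<and> (fs (-1) ^^ M) c = 0)" for e
  define Z where "Z d \<longleftrightarrow> d \<in> H \<and> (\<forall>X\<in>span G. br X d = 0)" for d
  have D: "\<exists>e d. h = e + d \<and> Ek e \<and> Z d" if h: "h \<in> H" for h
  proof -
    obtain a b where ab: "h = a + b" "a \<in> H" "(fs 1 ^^ J1) a = 0" "b \<in> H1"
      using dec1 h unfolding H1_def by blast
    obtain c d where cd: "b = c + d" "c \<in> H1" "(fs (-1) ^^ J2) c = 0" "d \<in> (fs (-1) ^^ J2) ` H1"
      using dec2 ab(4) by blast
    obtain t where t: "t \<in> H" "d = (fs (-1) ^^ J2) ((fs 1 ^^ J1) t)" using cd(4) unfolding H1_def by blast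
    define w where "w = (fs (-1) ^^ j2) ((fs 1 ^^ j1) t)"
    have wH: "w \<in> H" unfolding w_def using pow_inv'[OF invm1 pow_inv'[OF inv1 t(1)]] .
    have "d = fs (-1) ((fs (-1) ^^ j2) (fs 1 ((fs 1 ^^ j1) t)))"
      unfolding t(2) J1_def J2_def by simp
    also have "\<dots> = fs (-1) (fs 1 w)" unfolding w_def
      by (simp only: pow_commute[of "fs (-1)" "fs 1", OF fs_comm])
    also have "\<dots> = phi (phi w) - w" by (rule fs_m1_1)
    finally have dw: "d = phi (phi w) - w" .
    have a0: "(fs 1 ^^ M) a = 0" using pow_zero_mono[OF fs_lin ab(3)] unfolding M_def by simp
    have c0: "(fs (-1) ^^ M) c = 0" using pow_zero_mono[OF fs_lin cd(3)] unfolding M_def by simp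
    have cH: "c \<in> H" using cd(2) H1H by blast
    have dH: "d \<in> H" unfolding dw using Hinv wH subspace_diff[OF HS] by blast
    have "a + c \<in> H" using subspace_add[OF HS ab(2) cH] .
    then have "Ek (a + c)" unfolding Ek_def using a0 c0 by blast
    moreover have "Z d" unfolding Z_def using dH A wH dw by blast
    moreover have "h = (a + c) + d" using ab(1) cd(1) by (simp add: add.assoc)
    ultimately show ?thesis by blast
  qed
  have R1: "br X (br u d) = 0" if X: "X \<in> span G" and u: "u \<in> H" and d: "Z d" for X u d
  proof -
    have "br X u \<in> G" using spanGH X u unfolding G_def by blast
    then have "br (br X u) d = 0" using d span_base unfolding Z_def by blast
    moreover have "br X d = 0" using d X unfolding Z_def by blast
    ultimately show ?thesis using der[of X u d] br_r(3) by simp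
  qed
  have R2: "br X (br d u) = 0" if X: "X \<in> span G" and u: "u \<in> H" and d: "Z d" for X u d
    using R1[OF X u d] anti[of d u] br_r(4) by simp
  have ZH: "Z d \<Longrightarrow> d \<in> H" for d unfolding Z_def by blast
  have EH: "Ek e \<Longrightarrow> e \<in> H" for e unfolding Ek_def by blast
  have Rexp: "\<exists>e1 e2. Ek e1 \<and> Ek e2 \<and> br X (br c d) = br X (br e1 e2)"
    if X: "X \<in> span G" and c: "c \<in> H" and d: "d \<in> H" for X c d
  proof -
    obtain e1 d1 where 1: "c = e1 + d1" "Ek e1" "Z d1" using D[OF c] by blast
    obtain e2 d2 where 2: "d = e2 + d2" "Ek e2" "Z d2" using D[OF d] by blast
    have "br X (br c d) = br X (br e1 e2) + br X (br e1 d2) + (br X (br d1 e2) + br X (br d1 d2))"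
      unfolding 1(1) 2(1) by (simp only: br_l(1) br_r(1) ac_simps)
    also have "\<dots> = br X (br e1 e2)"
      using R1[OF X EH[OF 1(2)] 2(3)] R2[OF X EH[OF 2(2)] 1(3)] R1[OF X ZH[OF 1(3)] 2(3)] by simp
    finally show ?thesis using 1(2) 2(2) by blast
  qed
  have E4: "br (br e1 e2) (br e3 e4) = 0" if h: "Ek e1" "Ek e2" "Ek e3" "Ek e4" for e1 e2 e3 e4
  proof -
    obtain a1 c1 where 1: "e1 = a1 + c1" "(fs 1 ^^ M) a1 = 0" "(fs (-1) ^^ M) c1 = 0" using h(1) unfolding Ek_def by blast
    obtain a2 c2 where 2: "e2 = a2 + c2" "(fs 1 ^^ M) a2 = 0" "(fs (-1) ^^ M) c2 = 0" using h(2) unfolding Ek_def by blast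
    obtain a3 c3 where 3: "e3 = a3 + c3" "(fs 1 ^^ M) a3 = 0" "(fs (-1) ^^ M) c3 = 0" using h(3) unfolding Ek_def by blast
    obtain a4 c4 where 4: "e4 = a4 + c4" "(fs 1 ^^ M) a4 = 0" "(fs (-1) ^^ M) c4 = 0" using h(4) unfolding Ek_def by blast
    have "(fs (-1) ^^ (M + M)) (br e1 e2) = 0" unfolding 1(1) 2(1) by (rule Elem[OF 1(2,3) 2(2,3)])
    moreover have "(fs (-1) ^^ (M + M)) (br e3 e4) = 0" unfolding 3(1) 4(1) by (rule Elem[OF 3(2,3) 4(2,3)])
    ultimately show ?thesis by (rule abel[rotated]) simp
  qed
  have P: "br (br e1 e2) X = 0" if "Ek e1" "Ek e2" "X \<in> span G" for e1 e2 X
    using that(3)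
  proof (induction rule: span_induct_alt)
    case base then show ?case by (simp only: br_r(3))
  next
    case (step c x y)
    obtain a b where ab: "x = br a b" "a \<in> H" "b \<in> H" using Gmem[OF step(1)] by blast
    have "br e1 e2 \<in> span G" using Gin[OF EH[OF that(1)] EH[OF that(2)]] .
    then obtain e3 e4 where "Ek e3" "Ek e4" "br (br e1 e2) (br a b) = br (br e1 e2) (br e3 e4)"
      using Rexp ab(2,3) by blast
    then have "br (br e1 e2) x = 0" using E4[OF that(1,2)] ab(1) by simp
    then show ?case using step.IH by (simp only: br_r(1,2) scale_zero_right add_0)
  qed
  have "br X Y = 0" if X: "X \<in> span G" and Y: "Y \<in> span G" for X Y
    using Y
  proof (induction rule: span_induct_alt)
    case base then show ?case by (simp only: br_r(3))
  next
    case (step c y Y')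
    obtain a b where ab: "y = br a b" "a \<in> H" "b \<in> H" using Gmem[OF step(1)] by blast
    obtain e1 e2 where e: "Ek e1" "Ek e2" "br X (br a b) = br X (br e1 e2)" using Rexp[OF X ab(2,3)] by blast
    have "br X (br e1 e2) = - br (br e1 e2) X" by (rule anti)
    then have "br X y = 0" using e P[OF e(1,2) X] ab(1) by simp
    then show ?case using step.IH by (simp only: br_r(1,2) scale_zero_right add_0)
  qed
  then show ?thesis unfolding G_def by blast
qed

lemma main: "\<exists>N H. direct_sum_decomp N H \<and>
           cpa_ideal sc br (\<lambda>x y. br (phi x) y) N \<and>
           cpa_ideal sc br (\<lambda>x y. br (phi x) y) H \<and>
           phi ` N \<subseteq> N \<and> phi ` H \<subseteq> H \<and>
           nilpotent_on N phi \<and>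
           nil_inner_on sc br N (\<lambda>x y. br (phi x) y) \<and>
           bij_betw phi H H \<and>
           (\<forall>a\<in>bracket_space sc br H H. \<forall>b\<in>bracket_space sc br H H. br a b = 0)"
proof -
  have inv: "phi ` UNIV \<subseteq> UNIV" by simp
  obtain k0 where k0: "\<forall>j\<ge>k0. (\<forall>s'\<in>UNIV. \<exists>a b. s' = a + b \<and> a \<in> UNIV \<and> (phi ^^ j) a = 0 \<and> b \<in> (phi ^^ j) ` UNIV)
     \<and> (\<forall>t\<in>UNIV. (phi ^^ j) ((phi ^^ j) t) = 0 \<longrightarrow> (phi ^^ j) t = 0)
     \<and> phi ` ((phi ^^ j) ` UNIV) = (phi ^^ j) ` UNIV"
    using fitting[OF phi_lin subspace_UNIV inv] by (elim exE) (rule that)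
  define K where "K = Suc k0"
  have kk: "k0 \<le> K" by (simp add: K_def)
  note kK = k0[rule_format, OF kk]
  have dec: "\<exists>a b. z = a + b \<and> (phi ^^ K) a = 0 \<and> b \<in> range (phi ^^ K)" for z
    using kK by blast
  have inj0: "(phi ^^ K) ((phi ^^ K) t) = 0 \<Longrightarrow> (phi ^^ K) t = 0" for t
    using kK by blast
  have surj0: "phi ` range (phi ^^ K) = range (phi ^^ K)" using kK by blast
  define N where "N = {x. (phi ^^ K) x = 0}"
  define H where "H = range (phi ^^ K)"
  have PL: "Vector_Spaces.linear sc sc (phi ^^ K)" by (rule lin_pow[OF phi_lin])
  have NS: "subspace N" unfolding N_def by (rule subspace_ker[OF PL])
  have HS: "subspace H" unfolding H_def by (rule subspace_img[OF PL subspace_UNIV])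
  have NH0: "x = 0" if hN: "x \<in> N" and hH: "x \<in> H" for x
  proof -
    obtain t where t: "x = (phi ^^ K) t" using hH unfolding H_def by blast
    show ?thesis using inj0[of t] hN t unfolding N_def by simp
  qed
  have phiN: "phi ` N \<subseteq> N"
  proof
    fix z assume "z \<in> phi ` N"
    then obtain x where x: "x \<in> N" "z = phi x" by blast
    have "(phi ^^ K) (phi x) = phi ((phi ^^ K) x)" by (simp only: funpow_swap1)
    then show "z \<in> N" using x phi_l(3) unfolding N_def by simp
  qed
  have phiH: "phi ` H \<subseteq> H" using surj0 unfolding H_def by simp
  have NHbr: "br x y = 0" if hN: "x \<in> N" and hH: "y \<in> H" for x y
  proof -
    obtain t where t: "y = (phi ^^ K) t" using hH unfolding H_def by blast
    have "(phi ^^ K) x = 0" using hN unfolding N_def by simp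
    then show ?thesis unfolding t by (rule sign_pow_zero[OF phi_lin phi_lin Bm])
  qed
  have Hid: "\<forall>x y. y \<in> H \<longrightarrow> br x y \<in> H"
  proof (intro allI impI)
    fix x y assume y: "y \<in> H"
    obtain a b where ab: "x = a + b" "(phi ^^ K) a = 0" "b \<in> H" using dec[of x] unfolding H_def by blast
    obtain t where t: "b = (phi ^^ K) t" using ab(3) unfolding H_def by blast
    obtain u where u: "y = (phi ^^ K) u" using y unfolding H_def by blast
    have "br a y = 0" using NHbr[of a y] ab(2) y unfolding N_def by simp
    then have "br x y = br b y" unfolding ab(1) by (simp add: br_l(1))
    also have "\<dots> = (phi ^^ K) (br t u)" unfolding t u by (simp only: pow_hom)
    finally show "br x y \<in> H" unfolding H_def by blast
  qed
  have Nid: "\<forall>x y. y \<in> N \<longrightarrow> br x y \<in> N"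
  proof (intro allI impI)
    fix x y assume "y \<in> N"
    then show "br x y \<in> N" unfolding N_def by (simp add: pow_hom br_r(3))
  qed
  have cpaN: "cpa_ideal sc br (\<lambda>x y. br (phi x) y) N"
    unfolding cpa_ideal_def using NS Nid by blast
  have cpaH: "cpa_ideal sc br (\<lambda>x y. br (phi x) y) H"
    unfolding cpa_ideal_def using HS Hid by blast
  have dsum: "direct_sum_decomp N H"
    unfolding direct_sum_decomp_def
  proof
    show "N \<inter> H = {0}" using NH0 subspace_0[OF NS] subspace_0[OF HS] by blast
    show "\<forall>z. \<exists>x\<in>N. \<exists>y\<in>H. z = x + y" using dec unfolding N_def H_def by blast
  qed
  have nil: "nilpotent_on N phi" unfolding nilpotent_on_def N_def using phiN unfolding N_def by blast
  have ninner: "nil_inner_on sc br N (\<lambda>x y. br (phi x) y)"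
    unfolding nil_inner_on_def
  proof (intro exI conjI)
    show "lie_endo_on sc br N phi" unfolding lie_endo_on_def using phiN phi_l(1,2) phi_hom by blast
    show "nilpotent_on N phi" by (rule nil)
    show "\<forall>x\<in>N. \<forall>y\<in>N. br (phi x) y = br (phi x) y" by simp
  qed
  have bij: "bij_betw phi H H"
    unfolding bij_betw_def
  proof
    show "inj_on phi H"
    proof (rule inj_onI)
      fix a b assume a: "a \<in> H" and b: "b \<in> H" and e: "phi a = phi b"
      have dH: "a - b \<in> H" using subspace_diff[OF HS a b] .
      have "phi (a - b) = 0" using e phi_l(5) by simp
      then have "(phi ^^ K) (a - b) = 0" unfolding K_def
        by (simp add: funpow_Suc_right lin_zero[OF lin_pow[OF phi_lin]] del: funpow.simps)
      then have "a - b = 0" using NH0[OF _ dH] unfolding N_def by simp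
      then show "a = b" by simp
    qed
    show "phi ` H = H" using surj0 unfolding H_def .
  qed
  have Hsurj: "\<forall>h\<in>H. \<exists>h'\<in>H. h = phi h'" using surj0 unfolding H_def by blast
  have brk: "\<forall>a\<in>bracket_space sc br H H. \<forall>b\<in>bracket_space sc br H H. br a b = 0"
    unfolding bracket_space_def using bracket_part[OF HS phiH Hsurj Hid] .
  show ?thesis using dsum cpaN cpaH phiN phiH nil ninner bij brk by blast
qed

end

theorem theorem2p14:
  fixes sc :: "complex \<Rightarrow> 'a::ab_group_add \<Rightarrow> 'a"
    and br :: "'a \<Rightarrow> 'a \<Rightarrow> 'a"
    and phi :: "'a \<Rightarrow> 'a"
  assumes "fin_dim_complex_lie_algebra sc br"
    and "inner_cpa_via sc br phi"
  shows "\<exists>N H. direct_sum_decomp N H \<and>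
           cpa_ideal sc br (\<lambda>x y. br (phi x) y) N \<and>
           cpa_ideal sc br (\<lambda>x y. br (phi x) y) H \<and>
           phi ` N \<subseteq> N \<and> phi ` H \<subseteq> H \<and>
           nilpotent_on N phi \<and>
           nil_inner_on sc br N (\<lambda>x y. br (phi x) y) \<and>
           bij_betw phi H H \<and>
           (\<forall>a\<in>bracket_space sc br H H. \<forall>b\<in>bracket_space sc br H H. br a b = 0)"
proof -
  have la: "lie_algebra sc br" and fd: "\<exists>B. finite_dimensional_vector_space sc B"
    using assms(1) unfolding fin_dim_complex_lie_algebra_def by auto
  obtain B where B: "finite_dimensional_vector_space sc B" using fd by blast
  have bil: "bilinear_map sc br" and alt: "\<And>x. br x x = 0"
    and jac: "\<And>x y z. br x (br y z) + br y (br z x) + br z (br x y) = 0"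
    using la unfolding lie_algebra_def by auto
  have le: "lie_endo sc br phi" and cpa: "cpa_structure sc br (\<lambda>x y. br (phi x) y)"
    using assms(2) unfolding inner_cpa_via_def by auto
  have ax: "cpa_ctx_axioms sc br phi"
    unfolding cpa_ctx_axioms_def
  proof (intro allI conjI)
    show "Vector_Spaces.linear sc sc (br x)" for x using bil unfolding bilinear_map_def by blast
    show "Vector_Spaces.linear sc sc (\<lambda>x. br x y)" for y using bil unfolding bilinear_map_def by blast
    show "br x x = 0" for x by (rule alt)
    show "br x (br y z) + br y (br z x) + br z (br x y) = 0" for x y z by (rule jac)
    show "Vector_Spaces.linear sc sc phi" using le unfolding lie_endo_def by blast
    show "phi (br x y) = br (phi x) (phi y)" for x y using le unfolding lie_endo_def by blast
    show "br (phi x) y = br (phi y) x" for x y using cpa unfolding cpa_structure_def by blast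
  qed
  interpret cpa_ctx sc B br phi by (rule cpa_ctx.intro[OF B ax])
  show ?thesis by (rule main)
qed

end
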